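(* Let $K$ be a unital commutative ring containing $\mathbb{Q}$ and let $\big(\mathfrak{h},p,\mathfrak{g},[~,~]_\mathfrak{g},\dot{\rho}\big)$ be a $\mathfrak{g}$-augmented Leibniz algebra over $K$. Define a bracket on $\mathfrak{h}$ by $[x,y]_\mathfrak{h}:=p(x).y$ for $x,y\in\mathfrak{h}$. Then: \begin{enumerate} \item $\big(\mathfrak{h},[~,~]_\mathfrak{h}\big)$ is a (left) Leibniz algebra on which $\mathfrak{g}$ acts by derivations (via $\dot\rho$). If $(\Phi,\phi)$ is a morphism of augmented Leibniz algebras, then $\Phi$ is a morphism of Leibniz algebras for these brackets. \item $\mathrm{Ker}(p)$ is a $\mathfrak{g}$-invariant two-sided abelian ideal of $\big(\mathfrak{h},[~,~]_\mathfrak{h}\big)$ satisfying $Q(\mathfrak{h})\subset\mathrm{Ker}(p)\subset\mathfrak{z}(\mathfrak{h})$. \item $\mathrm{Im}(p)$ is an ideal of the Lie algebra $\mathfrak{g}$. \end{enumerate}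
   Context: A (left) Leibniz algebra over $K$ is a $K$-module $\mathfrak{h}$ with a bilinear bracket satisfying $[x,[y,z]]=[[x,y],z]+[y,[x,z]]$ for all $x,y,z$; a morphism of Leibniz algebras is a $K$-linear bracket-preserving map. For a Leibniz algebra $\mathfrak{h}$: $Q(\mathfrak{h})$ is the $K$-submodule of all finite sums $\sum_r\lambda_r[x_r,x_r]$ ($\lambda_r\in K$, $x_r\in\mathfrak{h}$), and $\mathfrak{z}(\mathfrak{h}):=\{x\in\mathfrak{h}\mid [x,y]=0\ \forall y\in\mathfrak{h}\}$. A $\mathfrak{g}$-augmented Leibniz algebra $\big(\mathfrak{h},p,\mathfrak{g},[~,~]_\mathfrak{g},\dot{\rho}\big)$ consists of a Lie algebra $(\mathfrak{g},[~,~]_\mathfrak{g})$ over $K$, a $K$-module $\mathfrak{h}$ which is a left $\mathfrak{g}$-module via $\dot\rho:\mathfrak{g}\otimes\mathfrak{h}\to\mathfrak{h}$, written $\dot\rho_\xi(x)=\xi.x$, and a $K$-linear map $p:\mathfrak{h}\to\mathfrak{g}$ with $p(\xi.x)=[\xi,p(x)]_\mathfrak{g}$ for all $\xi\in\mathfrak{g},x\in\mathfrak{h}$. A morphism $(\Phi,\phi)$ from $\big(\mathfrak{h},p,\mathfrak{g},[~,~]_\mathfrak{g},\dot{\rho}\big)$ to $\big(\mathfrak{h}',p',\mathfrak{g}',[~,~]'_{\mathfrak{g}'},\dot{\rho}'\big)$ is a pair of $K$-linear maps with $\phi:\mathfrak{g}\to\mathfrak{g}'$ a Lie algebra morphism,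 $\Phi:\mathfrak{h}\to\mathfrak{h}'$ satisfying $\Phi(\xi.x)=\phi(\xi).\Phi(x)$, and $p'\circ\Phi=\phi\circ p$. *)

theory Defs
  imports Complex_Main
begin

definition contains_rationals :: "'k::comm_ring_1 itself \<Rightarrow> bool" where
  "contains_rationals _ \<longleftrightarrow> (\<forall>n::nat. n > 0 \<longrightarrow> (\<exists>y::'k. of_nat n * y = 1))"

definition bilinear_map ::
  "('k::comm_ring_1 \<Rightarrow> 'a::ab_group_add \<Rightarrow> 'a) \<Rightarrow> ('k \<Rightarrow> 'b::ab_group_add \<Rightarrow> 'b) \<Rightarrow>
   ('k \<Rightarrow> 'c::ab_group_add \<Rightarrow> 'c) \<Rightarrow> ('a \<Rightarrow> 'b \<Rightarrow> 'c) \<Rightarrow> bool" where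
  "bilinear_map s1 s2 s3 f \<longleftrightarrow>
     (\<forall>x. module_hom s2 s3 (f x)) \<and> (\<forall>y. module_hom s1 s3 (\<lambda>x. f x y))"

definition leibniz_algebra ::
  "('k::comm_ring_1 \<Rightarrow> 'h::ab_group_add \<Rightarrow> 'h) \<Rightarrow> ('h \<Rightarrow> 'h \<Rightarrow> 'h) \<Rightarrow> bool" where
  "leibniz_algebra s br \<longleftrightarrow> module s \<and> bilinear_map s s s br \<and>
     (\<forall>x y z. br x (br y z) = br (br x y) z + br y (br x z))"

definition lie_algebra ::
  "('k::comm_ring_1 \<Rightarrow> 'g::ab_group_add \<Rightarrow> 'g) \<Rightarrow> ('g \<Rightarrow> 'g \<Rightarrow> 'g) \<Rightarrow> bool" where
  "lie_algebra s br \<longleftrightarrow> module s \<and> bilinear_map s s s br \<and> (\<forall>x. br x x = 0) \<and>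
     (\<forall>x y z. br x (br y z) = br (br x y) z + br y (br x z))"

definition lie_module ::
  "('k::comm_ring_1 \<Rightarrow> 'g::ab_group_add \<Rightarrow> 'g) \<Rightarrow> ('g \<Rightarrow> 'g \<Rightarrow> 'g) \<Rightarrow>
   ('k \<Rightarrow> 'h::ab_group_add \<Rightarrow> 'h) \<Rightarrow> ('g \<Rightarrow> 'h \<Rightarrow> 'h) \<Rightarrow> bool" where
  "lie_module sg brg sh act \<longleftrightarrow> lie_algebra sg brg \<and> module sh \<and> bilinear_map sg sh sh act \<and>
     (\<forall>\<xi> \<eta> x. act (brg \<xi> \<eta>) x = act \<xi> (act \<eta> x) - act \<eta> (act \<xi> x))"

definition augmented_leibniz ::
  "('k::comm_ring_1 \<Rightarrow> 'h::ab_group_add \<Rightarrow> 'h) \<Rightarrow> ('h \<Rightarrow> 'g::ab_group_add) \<Rightarrow>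
   ('k \<Rightarrow> 'g \<Rightarrow> 'g) \<Rightarrow> ('g \<Rightarrow> 'g \<Rightarrow> 'g) \<Rightarrow> ('g \<Rightarrow> 'h \<Rightarrow> 'h) \<Rightarrow> bool" where
  "augmented_leibniz sh p sg brg act \<longleftrightarrow> lie_module sg brg sh act \<and> module_hom sh sg p \<and>
     (\<forall>\<xi> x. p (act \<xi> x) = brg \<xi> (p x))"

definition augmented_leibniz_morphism ::
  "('k::comm_ring_1 \<Rightarrow> 'h::ab_group_add \<Rightarrow> 'h) \<Rightarrow> ('h \<Rightarrow> 'g::ab_group_add) \<Rightarrow>
   ('k \<Rightarrow> 'g \<Rightarrow> 'g) \<Rightarrow> ('g \<Rightarrow> 'g \<Rightarrow> 'g) \<Rightarrow> ('g \<Rightarrow> 'h \<Rightarrow> 'h) \<Rightarrow>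
   ('k \<Rightarrow> 'h2::ab_group_add \<Rightarrow> 'h2) \<Rightarrow> ('h2 \<Rightarrow> 'g2::ab_group_add) \<Rightarrow>
   ('k \<Rightarrow> 'g2 \<Rightarrow> 'g2) \<Rightarrow> ('g2 \<Rightarrow> 'g2 \<Rightarrow> 'g2) \<Rightarrow> ('g2 \<Rightarrow> 'h2 \<Rightarrow> 'h2) \<Rightarrow>
   ('h \<Rightarrow> 'h2) \<Rightarrow> ('g \<Rightarrow> 'g2) \<Rightarrow> bool" where
  "augmented_leibniz_morphism sh p sg brg act sh' p' sg' brg' act' Phi phi \<longleftrightarrow>
     module_hom sg sg' phi \<and> (\<forall>\<xi> \<eta>. phi (brg \<xi> \<eta>) = brg' (phi \<xi>) (phi \<eta>)) \<and>
     module_hom sh sh' Phi \<and> (\<forall>\<xi> x. Phi (act \<xi> x) = act' (phi \<xi>) (Phi x)) \<and>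
     (\<forall>x. p' (Phi x) = phi (p x))"

definition leibniz_morphism ::
  "('k::comm_ring_1 \<Rightarrow> 'h::ab_group_add \<Rightarrow> 'h) \<Rightarrow> ('h \<Rightarrow> 'h \<Rightarrow> 'h) \<Rightarrow>
   ('k \<Rightarrow> 'h2::ab_group_add \<Rightarrow> 'h2) \<Rightarrow> ('h2 \<Rightarrow> 'h2 \<Rightarrow> 'h2) \<Rightarrow> ('h \<Rightarrow> 'h2) \<Rightarrow> bool" where
  "leibniz_morphism s br s' br' f \<longleftrightarrow> module_hom s s' f \<and> (\<forall>x y. f (br x y) = br' (f x) (f y))"

definition aug_bracket :: "('h \<Rightarrow> 'g) \<Rightarrow> ('g \<Rightarrow> 'h \<Rightarrow> 'h) \<Rightarrow> 'h \<Rightarrow> 'h \<Rightarrow> 'h" where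
  "aug_bracket p act x y = act (p x) y"

definition acts_by_derivations :: "('g \<Rightarrow> 'h \<Rightarrow> 'h) \<Rightarrow> ('h \<Rightarrow> 'h \<Rightarrow> 'h::plus) \<Rightarrow> bool" where
  "acts_by_derivations act br \<longleftrightarrow> (\<forall>\<xi> x y. act \<xi> (br x y) = br (act \<xi> x) y + br x (act \<xi> y))"

definition leibniz_ideal ::
  "('k::comm_ring_1 \<Rightarrow> 'h::ab_group_add \<Rightarrow> 'h) \<Rightarrow> ('h \<Rightarrow> 'h \<Rightarrow> 'h) \<Rightarrow> 'h set \<Rightarrow> bool" where
  "leibniz_ideal s br I \<longleftrightarrow> module.subspace s I \<and>
     (\<forall>x\<in>I. \<forall>y. br x y \<in> I \<and> br y x \<in> I)"

definition abelian_subset :: "('h \<Rightarrow> 'h \<Rightarrow> 'h::zero) \<Rightarrow> 'h set \<Rightarrow> bool" where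
  "abelian_subset br I \<longleftrightarrow> (\<forall>x\<in>I. \<forall>y\<in>I. br x y = 0)"

definition invariant_subset :: "('g \<Rightarrow> 'h \<Rightarrow> 'h) \<Rightarrow> 'h set \<Rightarrow> bool" where
  "invariant_subset act I \<longleftrightarrow> (\<forall>\<xi> x. x \<in> I \<longrightarrow> act \<xi> x \<in> I)"

definition Qsq :: "('k::comm_ring_1 \<Rightarrow> 'h::ab_group_add \<Rightarrow> 'h) \<Rightarrow> ('h \<Rightarrow> 'h \<Rightarrow> 'h) \<Rightarrow> 'h set" where
  "Qsq s br = module.span s {br x x | x. True}"

definition left_center :: "('h \<Rightarrow> 'h \<Rightarrow> 'h::zero) \<Rightarrow> 'h set" where
  "left_center br = {x. \<forall>y. br x y = 0}"

definition lie_ideal ::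
  "('k::comm_ring_1 \<Rightarrow> 'g::ab_group_add \<Rightarrow> 'g) \<Rightarrow> ('g \<Rightarrow> 'g \<Rightarrow> 'g) \<Rightarrow> 'g set \<Rightarrow> bool" where
  "lie_ideal s br I \<longleftrightarrow> module.subspace s I \<and> (\<forall>x. \<forall>y\<in>I. br x y \<in> I)"

end

theory Submission
  imports Defs
begin

theorem proposition2p2:
  fixes sh :: "'k::comm_ring_1 \<Rightarrow> 'h::ab_group_add \<Rightarrow> 'h"
    and sg :: "'k \<Rightarrow> 'g::ab_group_add \<Rightarrow> 'g"
    and p :: "'h \<Rightarrow> 'g" and brg :: "'g \<Rightarrow> 'g \<Rightarrow> 'g" and act :: "'g \<Rightarrow> 'h \<Rightarrow> 'h"
  assumes "contains_rationals TYPE('k)"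
    and "augmented_leibniz sh p sg brg act"
  shows "leibniz_algebra sh (aug_bracket p act)
      \<and> acts_by_derivations act (aug_bracket p act)
      \<and> (\<forall>(sh' :: 'k \<Rightarrow> 'h2::ab_group_add \<Rightarrow> 'h2) (p' :: 'h2 \<Rightarrow> 'g2::ab_group_add)
            (sg' :: 'k \<Rightarrow> 'g2 \<Rightarrow> 'g2) brg' act' Phi phi.
           augmented_leibniz sh' p' sg' brg' act' \<longrightarrow>
           augmented_leibniz_morphism sh p sg brg act sh' p' sg' brg' act' Phi phi \<longrightarrow>
           leibniz_morphism sh (aug_bracket p act) sh' (aug_bracket p' act') Phi)
      \<and> leibniz_ideal sh (aug_bracket p act) {x. p x = 0}
      \<and> invariant_subset act {x. p x = 0}
      \<and> abelian_subset (aug_bracket p act) {x. p x = 0}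
      \<and> Qsq sh (aug_bracket p act) \<subseteq> {x. p x = 0}
      \<and> {x. p x = 0} \<subseteq> left_center (aug_bracket p act)
      \<and> lie_ideal sg brg (range p)"
proof -
  from assms(2) have LM: "lie_module sg brg sh act" and P: "module_hom sh sg p"
    and pact: "\<And>\<xi> x. p (act \<xi> x) = brg \<xi> (p x)"
    by (auto simp: augmented_leibniz_def)
  from LM have LA: "lie_algebra sg brg" and Mh: "module sh" and BA: "bilinear_map sg sh sh act"
    and actbr: "\<And>\<xi> \<eta> x. act (brg \<xi> \<eta>) x = act \<xi> (act \<eta> x) - act \<eta> (act \<xi> x)"
    by (auto simp: lie_module_def)
  from LA have BG: "bilinear_map sg sg sg brg" and alt: "\<And>x. brg x x = 0"
    by (auto simp: lie_algebra_def)
  from BA have A1: "\<And>\<xi>. module_hom sh sh (act \<xi>)" and A2: "\<And>y. module_hom sg sh (\<lambda>\<xi>. act \<xi> y)"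
    by (auto simp: bilinear_map_def)
  from BG have G1: "\<And>\<xi>. module_hom sg sg (brg \<xi>)"
    by (auto simp: bilinear_map_def)
  have act0: "\<And>y. act 0 y = 0" using module_hom.zero[OF A2] by simp
  have brg0: "\<And>\<xi>. brg \<xi> 0 = 0" using module_hom.zero[OF G1] by simp
  have p0: "p 0 = 0" using module_hom.zero[OF P] .
  have kersub: "module.subspace sh {x. p x = 0}" using module_hom.subspace_kernel[OF P] .
  have L: "leibniz_algebra sh (aug_bracket p act)"
    unfolding leibniz_algebra_def bilinear_map_def aug_bracket_def
  proof (intro conjI allI Mh)
    fix x show "module_hom sh sh (act (p x))" by (rule A1)
  next
    fix y show "module_hom sh sh (\<lambda>x. act (p x) y)"
      using module_hom_compose[OF P A2[of y]] by (simp add: comp_def)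
  next
    fix x y z
    show "act (p x) (act (p y) z) = act (p (act (p x) y)) z + act (p y) (act (p x) z)"
      by (simp add: pact actbr)
  qed
  have D: "acts_by_derivations act (aug_bracket p act)"
    unfolding acts_by_derivations_def aug_bracket_def
    by (simp add: pact actbr module_hom.add[OF A1])
  have M: "\<forall>(sh' :: 'k \<Rightarrow> 'h2::ab_group_add \<Rightarrow> 'h2) (p' :: 'h2 \<Rightarrow> 'g2::ab_group_add)
            (sg' :: 'k \<Rightarrow> 'g2 \<Rightarrow> 'g2) brg' act' Phi phi.
           augmented_leibniz sh' p' sg' brg' act' \<longrightarrow>
           augmented_leibniz_morphism sh p sg brg act sh' p' sg' brg' act' Phi phi \<longrightarrow>
           leibniz_morphism sh (aug_bracket p act) sh' (aug_bracket p' act') Phi"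
    by (auto simp: augmented_leibniz_morphism_def leibniz_morphism_def aug_bracket_def)
  have I: "leibniz_ideal sh (aug_bracket p act) {x. p x = 0}"
    unfolding leibniz_ideal_def aug_bracket_def
    using kersub by (simp add: act0 p0 pact brg0)
  have Inv: "invariant_subset act {x. p x = 0}"
    unfolding invariant_subset_def by (simp add: pact brg0)
  have Ab: "abelian_subset (aug_bracket p act) {x. p x = 0}"
    unfolding abelian_subset_def aug_bracket_def by (simp add: act0)
  have Q: "Qsq sh (aug_bracket p act) \<subseteq> {x. p x = 0}"
    unfolding Qsq_def
    by (rule module.span_minimal[OF Mh _ kersub]) (auto simp: aug_bracket_def pact alt)
  have Z: "{x. p x = 0} \<subseteq> left_center (aug_bracket p act)"
    unfolding left_center_def aug_bracket_def by (auto simp: act0)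
  have R: "lie_ideal sg brg (range p)"
    unfolding lie_ideal_def
  proof (intro conjI allI ballI)
    show "module.subspace sg (range p)"
      using module_hom.subspace_image[OF P module.subspace_UNIV[OF Mh]] .
  next
    fix x y assume "y \<in> range p"
    then obtain z where "y = p z" by auto
    then show "brg x y \<in> range p" by (metis pact rangeI)
  qed
  show ?thesis using L D M I Inv Ab Q Z R by blast
qed

end
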